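(* Let $G$ be a connected groupoid with finite object set $G_0=\{e_1,\dots,e_r\}$, $A=\bigoplus_{i=1}^r A_i$ a unital ring with $A_i:=A_{e_i}\neq 0$ for all $i$, and $\alpha=(A_g,\alpha_g)_{g\in G}$ a unital global action of $G$ on $A$. If $A\subset A\star_\alpha G$ is a separable extension, then $G$ is finite.
   Context: A groupoid $G$ is a small category in which every morphism is invertible; $G_0$ is its object set (objects identified with identity morphisms), $s,t$ source and target; $gh$ is defined iff $s(g)=t(h)$; $G(e,f)$ is the set of morphisms from $e$ to $f$; $G$ is connected if $G(e,f)\neq\emptyset$ for all $e,f\in G_0$. A unital partial action of $G$ on $A$ is a family $\alpha=(A_g,\alpha_g)_{g\in G}$ where $A_{t(g)}$ is a two-sided ideal of $A$, $A_g=A1_g$ is a two-sided ideal of $A_{t(g)}$ with $1_g$ a central idempotent of $A$, $\alpha_g:A_{g^{-1}}\to A_g$ a ring isomorphism, such that $\alpha_e=\mathrm{id}_{A_e}$ for $e\in G_0$, $\alpha_h^{-1}(A_{g^{-1}}\cap A_h)\subseteq A_{(gh)^{-1}}$ and $\alpha_g(\alpha_h(x))=\alpha_{gh}(x)$ for $x\in\alpha_h^{-1}(A_{g^{-1}}\cap A_h)$, whenever $s(g)=t(h)$. It is global if $\alpha_g\alpha_h=\alpha_{gh}$ for all composable $g,h$; equivalently $A_g=A_{t(g)}$ for all $g\in G$. The (partial) skew groupoid ring $A\star_\alpha G=\bigoplus_{g\in G}A_g\delta_g$ has multiplication $(a_g\delta_g)(b_h\delta_h)=\alpha_g(\alpha_{g^{-1}}(a_g)b_h)\delta_{gh}$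 if $s(g)=t(h)$ and $0$ otherwise; it is unital with $1=\sum_{e\in G_0}1_e\delta_e$, and $A$ is regarded as a subring via $a\mapsto\sum_{e\in G_0}(a1_e)\delta_e$. A ring extension $R\subseteq S$ is separable if the multiplication map $S\otimes_R S\to S$ splits as a map of $(S,S)$-bimodules; equivalently there exists $x\in S\otimes_R S$ with $m(x)=1_S$ and $sx=xs$ for all $s\in S$. *)

theory Defs
  imports Main "HOL-Algebra.Ring"
begin

text \<open>A groupoid is given by its set of morphisms G, its set of objects G0 (identified
with identity morphisms, G0 \<subseteq> G), source s, target t, composition mul
(mul g h = gh, defined when s g = t h) and inversion ginv.\<close>

definition groupoid ::
  "'g set \<Rightarrow> 'g set \<Rightarrow> ('g \<Rightarrow> 'g) \<Rightarrow> ('g \<Rightarrow> 'g) \<Rightarrow> ('g \<Rightarrow> 'g \<Rightarrow> 'g) \<Rightarrow> ('g \<Rightarrow> 'g) \<Rightarrow> bool"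
where
  "groupoid G G0 s t mul ginv \<longleftrightarrow>
     G0 \<subseteq> G \<and>
     (\<forall>g\<in>G. s g \<in> G0 \<and> t g \<in> G0) \<and>
     (\<forall>e\<in>G0. s e = e \<and> t e = e) \<and>
     (\<forall>g\<in>G. \<forall>h\<in>G. s g = t h \<longrightarrow>
        mul g h \<in> G \<and> s (mul g h) = s h \<and> t (mul g h) = t g) \<and>
     (\<forall>g\<in>G. \<forall>h\<in>G. \<forall>k\<in>G. s g = t h \<and> s h = t k \<longrightarrow>
        mul (mul g h) k = mul g (mul h k)) \<and>
     (\<forall>g\<in>G. mul (t g) g = g \<and> mul g (s g) = g) \<and>
     (\<forall>g\<in>G. ginv g \<in> G \<and> s (ginv g) = t g \<and> t (ginv g) = s g \<and>
        mul g (ginv g) = t g \<and> mul (ginv g) g = s g)"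

definition groupoid_connected :: "'g set \<Rightarrow> 'g set \<Rightarrow> ('g \<Rightarrow> 'g) \<Rightarrow> ('g \<Rightarrow> 'g) \<Rightarrow> bool" where
  "groupoid_connected G G0 s t \<longleftrightarrow> (\<forall>e\<in>G0. \<forall>f\<in>G0. \<exists>g\<in>G. s g = e \<and> t g = f)"

text \<open>Principal (two-sided, since c is central) ideal A c generated by c.\<close>
definition ideal_of :: "'a::ring_1 \<Rightarrow> 'a set" where
  "ideal_of c = range (\<lambda>x. x * c)"

definition central_idempotent :: "'a::ring_1 \<Rightarrow> bool" where
  "central_idempotent c \<longleftrightarrow> c * c = c \<and> (\<forall>x. x * c = c * x)"

text \<open>Unital partial action (A_g, alpha_g) of G on the ring A (= UNIV of type 'a):
  A_g = A * one_g g with one_g g a central idempotent, A_g \<subseteq> A_{t g},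
  alpha g : A_{g^{-1}} \<rightarrow> A_g a ring isomorphism, alpha_e = id, and the
  partial composition rule.\<close>
definition unital_partial_action ::
  "'g set \<Rightarrow> 'g set \<Rightarrow> ('g \<Rightarrow> 'g) \<Rightarrow> ('g \<Rightarrow> 'g) \<Rightarrow> ('g \<Rightarrow> 'g \<Rightarrow> 'g) \<Rightarrow> ('g \<Rightarrow> 'g)
    \<Rightarrow> ('g \<Rightarrow> 'a::ring_1) \<Rightarrow> ('g \<Rightarrow> 'a \<Rightarrow> 'a) \<Rightarrow> bool"
where
  "unital_partial_action G G0 s t mul ginv one_g alpha \<longleftrightarrow>
     (\<forall>g\<in>G. central_idempotent (one_g g)) \<and>
     (\<forall>g\<in>G. ideal_of (one_g g) \<subseteq> ideal_of (one_g (t g))) \<and>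
     (\<forall>g\<in>G. bij_betw (alpha g) (ideal_of (one_g (ginv g))) (ideal_of (one_g g)) \<and>
        (\<forall>x\<in>ideal_of (one_g (ginv g)). \<forall>y\<in>ideal_of (one_g (ginv g)).
           alpha g (x + y) = alpha g x + alpha g y \<and> alpha g (x * y) = alpha g x * alpha g y)) \<and>
     (\<forall>e\<in>G0. \<forall>x\<in>ideal_of (one_g e). alpha e x = x) \<and>
     (\<forall>g\<in>G. \<forall>h\<in>G. s g = t h \<longrightarrow>
        (\<forall>x\<in>ideal_of (one_g (ginv h)). alpha h x \<in> ideal_of (one_g (ginv g)) \<longrightarrow>
           x \<in> ideal_of (one_g (ginv (mul g h))) \<and> alpha g (alpha h x) = alpha (mul g h) x))"

definition global_action ::
  "'g set \<Rightarrow> 'g set \<Rightarrow> ('g \<Rightarrow> 'g) \<Rightarrow> ('g \<Rightarrow> 'g) \<Rightarrow> ('g \<Rightarrow> 'g \<Rightarrow> 'g) \<Rightarrow> ('g \<Rightarrow> 'g)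
    \<Rightarrow> ('g \<Rightarrow> 'a::ring_1) \<Rightarrow> ('g \<Rightarrow> 'a \<Rightarrow> 'a) \<Rightarrow> bool"
where
  "global_action G G0 s t mul ginv one_g alpha \<longleftrightarrow>
     unital_partial_action G G0 s t mul ginv one_g alpha \<and>
     (\<forall>g\<in>G. ideal_of (one_g g) = ideal_of (one_g (t g)))"

text \<open>Elements \<Sum> a_g \<delta>_g are represented as finitely supported functions f : G \<rightarrow> A
  with f g \<in> A_g (and f g = 0 outside G).\<close>
definition skew_groupoid_ring ::
  "'g set \<Rightarrow> 'g set \<Rightarrow> ('g \<Rightarrow> 'g) \<Rightarrow> ('g \<Rightarrow> 'g) \<Rightarrow> ('g \<Rightarrow> 'g \<Rightarrow> 'g) \<Rightarrow> ('g \<Rightarrow> 'g)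
    \<Rightarrow> ('g \<Rightarrow> 'a::ring_1) \<Rightarrow> ('g \<Rightarrow> 'a \<Rightarrow> 'a) \<Rightarrow> ('g \<Rightarrow> 'a) ring"
where
  "skew_groupoid_ring G G0 s t mul ginv one_g alpha =
    \<lparr> carrier = {f. (\<forall>g. g \<notin> G \<longrightarrow> f g = 0) \<and> (\<forall>g\<in>G. f g \<in> ideal_of (one_g g))
                    \<and> finite {g. f g \<noteq> 0}},
      monoid.mult = (\<lambda>f h. \<lambda>k. if k \<in> G then
                        (\<Sum>g\<in>{g\<in>G. f g \<noteq> 0 \<and> t g = t k}.
                            alpha g (alpha (ginv g) (f g) * h (mul (ginv g) k)))
                      else 0),
      one = (\<lambda>k. if k \<in> G0 then one_g k else 0),
      zero = (\<lambda>k. 0),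
      add = (\<lambda>f h. \<lambda>k. f k + h k) \<rparr>"

definition skew_embed :: "'g set \<Rightarrow> ('g \<Rightarrow> 'a::ring_1) \<Rightarrow> 'a \<Rightarrow> ('g \<Rightarrow> 'a)" where
  "skew_embed G0 one_g a = (\<lambda>k. if k \<in> G0 then a * one_g k else 0)"

text \<open>Tensor product S \<otimes>_R S realised as the free abelian group on S \<times> S
  (finitely supported integer-valued functions) modulo the subgroup generated by
  the bilinearity and R-balancedness relations.\<close>

definition fdelta :: "'c \<times> 'c \<Rightarrow> ('c \<times> 'c \<Rightarrow> int)" where
  "fdelta p = (\<lambda>q. if q = p then 1 else 0)"

definition fsupp :: "('c \<times> 'c \<Rightarrow> int) \<Rightarrow> ('c \<times> 'c) set" where
  "fsupp x = {p. x p \<noteq> 0}"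

definition formal_sums :: "('c, 'm) ring_scheme \<Rightarrow> ('c \<times> 'c \<Rightarrow> int) set" where
  "formal_sums S = {x. finite (fsupp x) \<and> fsupp x \<subseteq> carrier S \<times> carrier S}"

inductive_set tensor_rel :: "('c, 'm) ring_scheme \<Rightarrow> 'c set \<Rightarrow> ('c \<times> 'c \<Rightarrow> int) set"
  for S :: "('c, 'm) ring_scheme" and R :: "'c set"
where
  zero: "(\<lambda>_. 0) \<in> tensor_rel S R"
| add_left: "\<lbrakk>a \<in> carrier S; a' \<in> carrier S; b \<in> carrier S\<rbrakk> \<Longrightarrow>
     fdelta (a \<oplus>\<^bsub>S\<^esub> a', b) - fdelta (a, b) - fdelta (a', b) \<in> tensor_rel S R"
| add_right: "\<lbrakk>a \<in> carrier S; b \<in> carrier S; b' \<in> carrier S\<rbrakk> \<Longrightarrow>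
     fdelta (a, b \<oplus>\<^bsub>S\<^esub> b') - fdelta (a, b) - fdelta (a, b') \<in> tensor_rel S R"
| balanced: "\<lbrakk>a \<in> carrier S; r \<in> R; b \<in> carrier S\<rbrakk> \<Longrightarrow>
     fdelta (a \<otimes>\<^bsub>S\<^esub> r, b) - fdelta (a, r \<otimes>\<^bsub>S\<^esub> b) \<in> tensor_rel S R"
| diff: "\<lbrakk>x \<in> tensor_rel S R; y \<in> tensor_rel S R\<rbrakk> \<Longrightarrow> x - y \<in> tensor_rel S R"

definition tensor_lmul :: "('c, 'm) ring_scheme \<Rightarrow> 'c \<Rightarrow> ('c \<times> 'c \<Rightarrow> int) \<Rightarrow> ('c \<times> 'c \<Rightarrow> int)" where
  "tensor_lmul S c x = (\<lambda>q. \<Sum>p\<in>fsupp x. if q = (c \<otimes>\<^bsub>S\<^esub> fst p, snd p) then x p else 0)"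

definition tensor_rmul :: "('c, 'm) ring_scheme \<Rightarrow> ('c \<times> 'c \<Rightarrow> int) \<Rightarrow> 'c \<Rightarrow> ('c \<times> 'c \<Rightarrow> int)" where
  "tensor_rmul S x c = (\<lambda>q. \<Sum>p\<in>fsupp x. if q = (fst p, snd p \<otimes>\<^bsub>S\<^esub> c) then x p else 0)"

definition tensor_mult_map :: "('c, 'm) ring_scheme \<Rightarrow> ('c \<times> 'c \<Rightarrow> int) \<Rightarrow> 'c" where
  "tensor_mult_map S x = (\<Oplus>\<^bsub>S\<^esub> p\<in>fsupp x. add_pow S (x p) (fst p \<otimes>\<^bsub>S\<^esub> snd p))"

definition separable_extension :: "('c, 'm) ring_scheme \<Rightarrow> 'c set \<Rightarrow> bool" where
  "separable_extension S R \<longleftrightarrow>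
     (\<exists>x\<in>formal_sums S. tensor_mult_map S x = \<one>\<^bsub>S\<^esub> \<and>
        (\<forall>c\<in>carrier S. tensor_lmul S c x - tensor_rmul S x c \<in> tensor_rel S R))"

end

theory Submission
  imports Defs
begin

lemma ci_comm: "central_idempotent c \<Longrightarrow> x * c = c * x"
  unfolding central_idempotent_def by blast
lemma ci_idem: "central_idempotent c \<Longrightarrow> c * c = c"
  unfolding central_idempotent_def by blast

lemma ideal_mem:
  assumes "central_idempotent c"
  shows "x \<in> ideal_of c \<longleftrightarrow> x * c = x"
proof
  assume "x \<in> ideal_of c"
  then obtain z where z: "x = z * c" by (auto simp: ideal_of_def)
  have "x * c = z * (c * c)" unfolding z by (rule mult.assoc)
  also have "\<dots> = x" using z ci_idem[OF assms] by simp
  finally show "x * c = x" .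
next
  assume "x * c = x" then show "x \<in> ideal_of c" unfolding ideal_of_def by (metis rangeI)
qed

lemma ideal_mem_l:
  assumes "central_idempotent c" "x \<in> ideal_of c"
  shows "c * x = x"
  using ci_comm[OF assms(1), of x] ideal_mem[OF assms(1)] assms(2) by simp

lemma ideal_add: "central_idempotent c \<Longrightarrow> x \<in> ideal_of c \<Longrightarrow> y \<in> ideal_of c \<Longrightarrow> x + y \<in> ideal_of c"
  by (simp add: ideal_mem distrib_right)

lemma ideal_zero: "central_idempotent c \<Longrightarrow> 0 \<in> ideal_of c"
  by (simp add: ideal_mem)

lemma ideal_neg: "central_idempotent c \<Longrightarrow> x \<in> ideal_of c \<Longrightarrow> - x \<in> ideal_of c"
  by (simp add: ideal_mem)

lemma ideal_lmul: "central_idempotent c \<Longrightarrow> x \<in> ideal_of c \<Longrightarrow> z * x \<in> ideal_of c"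
  by (simp add: ideal_mem mult.assoc)

lemma ideal_rmul:
  assumes a: "central_idempotent c" "x \<in> ideal_of c"
  shows "x * z \<in> ideal_of c"
proof -
  have "x * z * c = x * (z * c)" by (rule mult.assoc)
  also have "\<dots> = x * (c * z)" using ci_comm[OF a(1), of z] by simp
  also have "\<dots> = (x * c) * z" by (simp add: mult.assoc)
  also have "\<dots> = x * z" using ideal_mem[OF a(1)] a(2) by simp
  finally show ?thesis using ideal_mem[OF a(1)] by simp
qed

lemma ideal_gen: "central_idempotent c \<Longrightarrow> z * c \<in> ideal_of c"
  by (simp add: ideal_of_def)

lemma ideal_self: "central_idempotent c \<Longrightarrow> c \<in> ideal_of c"
  using ideal_mem ci_idem by blast

lemma ideal_sum: "central_idempotent c \<Longrightarrow> (\<And>i. i \<in> I \<Longrightarrow> f i \<in> ideal_of c) \<Longrightarrow> sum f I \<in> ideal_of c"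
  by (induction I rule: infinite_finite_induct) (auto simp: ideal_zero ideal_add)

lemma ideal_eq_idem:
  assumes "central_idempotent c" "central_idempotent d" "ideal_of c = ideal_of d"
  shows "c = d"
proof -
  have "c * d = c" using assms ideal_self[OF assms(1)] ideal_mem[OF assms(2)] by simp
  moreover have "d * c = d" using assms ideal_self[OF assms(2)] ideal_mem[OF assms(1)] by simp
  moreover have "c * d = d * c" using ci_comm[OF assms(1)] by simp
  ultimately show ?thesis by simp
qed

definition hat :: "('c \<times> 'c \<Rightarrow> 'a::ring_1) \<Rightarrow> ('c \<times> 'c \<Rightarrow> int) \<Rightarrow> 'a" where
  "hat F x = (\<Sum>p\<in>fsupp x. of_int (x p) * F p)"

lemma hat_superset:
  assumes "finite X" "fsupp x \<subseteq> X"
  shows "hat F x = (\<Sum>p\<in>X. of_int (x p) * F p)"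
  unfolding hat_def
  by (rule sum.mono_neutral_left) (use assms in \<open>auto simp: fsupp_def\<close>)

lemma fsupp_diff: "fsupp (x - y) \<subseteq> fsupp x \<union> fsupp y"
  by (auto simp: fsupp_def)

lemma hat_diff:
  assumes "finite (fsupp x)" "finite (fsupp y)"
  shows "hat F (x - y) = hat F x - hat F y"
proof -
  let ?X = "fsupp x \<union> fsupp y"
  have "hat F (x - y) = (\<Sum>p\<in>?X. of_int ((x - y) p) * F p)"
    by (rule hat_superset) (use assms fsupp_diff in auto)
  also have "\<dots> = (\<Sum>p\<in>?X. of_int (x p) * F p) - (\<Sum>p\<in>?X. of_int (y p) * F p)"
    by (simp add: sum_subtractf algebra_simps)
  also have "\<dots> = hat F x - hat F y"
    using hat_superset[of ?X x F] hat_superset[of ?X y F] assms by auto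
  finally show ?thesis .
qed

lemma fsupp_fdelta: "fsupp (fdelta p) = {p}"
  by (auto simp: fsupp_def fdelta_def)

lemma hat_fdelta: "hat F (fdelta p) = F p"
  unfolding hat_def fsupp_fdelta by (simp add: fdelta_def)

lemma fin2: "finite (fsupp (fdelta p - fdelta q))"
  by (rule finite_subset[of _ "{p,q}"]) (auto simp: fsupp_def fdelta_def)

lemma fin3: "finite (fsupp (fdelta p - fdelta q - fdelta r))"
  by (rule finite_subset[of _ "{p,q,r}"]) (auto simp: fsupp_def fdelta_def)

lemma hat3: "hat F (fdelta p - fdelta q - fdelta r) = F p - F q - F r"
proof -
  have f2: "finite (fsupp (fdelta p - fdelta q))"
    by (rule finite_subset[of _ "{p,q}"]) (auto simp: fsupp_def fdelta_def)
  show ?thesis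
    by (simp only: hat_diff f2 fsupp_fdelta finite.intros hat_fdelta)
qed

lemma hat_rel:
  fixes S :: "('c, 'm) ring_scheme" and F :: "'c \<times> 'c \<Rightarrow> 'a::ring_1"
  assumes addl: "\<And>a a' b. a \<in> carrier S \<Longrightarrow> a' \<in> carrier S \<Longrightarrow> b \<in> carrier S \<Longrightarrow>
              F (a \<oplus>\<^bsub>S\<^esub> a', b) = F (a, b) + F (a', b)"
    and addr: "\<And>a b b'. a \<in> carrier S \<Longrightarrow> b \<in> carrier S \<Longrightarrow> b' \<in> carrier S \<Longrightarrow>
              F (a, b \<oplus>\<^bsub>S\<^esub> b') = F (a, b) + F (a, b')"
    and bal: "\<And>a r b. a \<in> carrier S \<Longrightarrow> r \<in> R \<Longrightarrow> b \<in> carrier S \<Longrightarrow>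
              F (a \<otimes>\<^bsub>S\<^esub> r, b) = F (a, r \<otimes>\<^bsub>S\<^esub> b)"
    and x: "x \<in> tensor_rel S R"
  shows "finite (fsupp x) \<and> hat F x = 0"
  using x
proof induction
  case zero
  then show ?case by (simp add: hat_def fsupp_def)
next
  case (add_left a a' b)
  then show ?case by (simp only: fin3 hat3 addl) simp
next
  case (add_right a b b')
  then show ?case by (simp only: fin3 hat3 addr) simp
next
  case (balanced a r b)
  then show ?case by (simp only: fin2 hat_diff fsupp_fdelta hat_fdelta bal finite.intros) simp
next
  case (diff x y)
  have "finite (fsupp (x - y))" using diff finite_subset[OF fsupp_diff] by blast
  moreover have "hat F (x - y) = hat F x - hat F y" using diff hat_diff by blast
  moreover have "(\<lambda>a. x a - y a) = x - y" by auto
  ultimately show ?case using diff by simp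
qed

lemma hat_push:
  fixes F :: "'c \<times> 'c \<Rightarrow> 'a::ring_1" and \<phi> :: "'c \<times> 'c \<Rightarrow> 'c \<times> 'c"
  assumes fin: "finite (fsupp x)"
  defines "y \<equiv> (\<lambda>q. \<Sum>p\<in>fsupp x. if q = \<phi> p then x p else 0)"
  shows "finite (fsupp y) \<and> hat F y = (\<Sum>p\<in>fsupp x. of_int (x p) * F (\<phi> p))"
proof -
  let ?P = "fsupp x"
  have sub: "fsupp y \<subseteq> \<phi> ` ?P"
  proof
    fix q assume "q \<in> fsupp y"
    then have "(\<Sum>p\<in>?P. if q = \<phi> p then x p else 0) \<noteq> 0" by (simp add: fsupp_def y_def)
    then obtain p where "p \<in> ?P" "(if q = \<phi> p then x p else 0) \<noteq> 0" by (rule sum.not_neutral_contains_not_neutral)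
    then show "q \<in> \<phi> ` ?P" by (auto split: if_splits)
  qed
  have "hat F y = (\<Sum>q\<in>\<phi> ` ?P. of_int (y q) * F q)"
    by (rule hat_superset) (use fin sub in auto)
  also have "\<dots> = (\<Sum>q\<in>\<phi> ` ?P. \<Sum>p\<in>?P. if q = \<phi> p then of_int (x p) * F q else 0)"
    unfolding y_def of_int_sum sum_distrib_right by (intro sum.cong refl) simp
  also have "\<dots> = (\<Sum>p\<in>?P. \<Sum>q\<in>\<phi> ` ?P. if q = \<phi> p then of_int (x p) * F q else 0)"
    by (rule sum.swap)
  also have "\<dots> = (\<Sum>p\<in>?P. of_int (x p) * F (\<phi> p))"
  proof (rule sum.cong[OF refl])
    fix p assume "p \<in> ?P"
    then show "(\<Sum>q\<in>\<phi> ` ?P. if q = \<phi> p then of_int (x p) * F q else 0) = of_int (x p) * F (\<phi> p)"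
      using sum.delta[of "\<phi> ` ?P" "\<phi> p" "\<lambda>q. of_int (x p) * F q"] fin by simp
  qed
  finally show ?thesis using finite_subset[OF sub] fin by auto
qed

locale skset =
  fixes G G0 :: "'g set"
    and s t :: "'g \<Rightarrow> 'g"
    and mul :: "'g \<Rightarrow> 'g \<Rightarrow> 'g"
    and ginv :: "'g \<Rightarrow> 'g"
    and one_g :: "'g \<Rightarrow> 'a::ring_1"
    and alpha :: "'g \<Rightarrow> 'a \<Rightarrow> 'a"
  assumes grp: "groupoid G G0 s t mul ginv"
    and glob: "global_action G G0 s t mul ginv one_g alpha"
    and nz: "\<forall>e\<in>G0. one_g e \<noteq> 0"
begin

abbreviation "A g \<equiv> ideal_of (one_g g)"

lemma G0_sub: "e \<in> G0 \<Longrightarrow> e \<in> G" using grp unfolding groupoid_def by blast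
lemma st_G0: "g \<in> G \<Longrightarrow> s g \<in> G0" "g \<in> G \<Longrightarrow> t g \<in> G0" using grp unfolding groupoid_def by blast+
lemma st_G: "g \<in> G \<Longrightarrow> s g \<in> G" "g \<in> G \<Longrightarrow> t g \<in> G" using st_G0 G0_sub by blast+
lemma st_obj: "e \<in> G0 \<Longrightarrow> s e = e" "e \<in> G0 \<Longrightarrow> t e = e" using grp unfolding groupoid_def by blast+
lemma mul_G: "g \<in> G \<Longrightarrow> h \<in> G \<Longrightarrow> s g = t h \<Longrightarrow> mul g h \<in> G"
  and mul_s: "g \<in> G \<Longrightarrow> h \<in> G \<Longrightarrow> s g = t h \<Longrightarrow> s (mul g h) = s h"
  and mul_t: "g \<in> G \<Longrightarrow> h \<in> G \<Longrightarrow> s g = t h \<Longrightarrow> t (mul g h) = t g"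
  using grp unfolding groupoid_def by blast+
lemma mul_assoc: "g \<in> G \<Longrightarrow> h \<in> G \<Longrightarrow> k \<in> G \<Longrightarrow> s g = t h \<Longrightarrow> s h = t k \<Longrightarrow>
   mul (mul g h) k = mul g (mul h k)"
  using grp unfolding groupoid_def by blast
lemma mul_unit: "g \<in> G \<Longrightarrow> mul (t g) g = g" "g \<in> G \<Longrightarrow> mul g (s g) = g"
  using grp unfolding groupoid_def by blast+
lemma ginv_G: "g \<in> G \<Longrightarrow> ginv g \<in> G"
  and ginv_s: "g \<in> G \<Longrightarrow> s (ginv g) = t g"
  and ginv_t: "g \<in> G \<Longrightarrow> t (ginv g) = s g"
  and ginv_r: "g \<in> G \<Longrightarrow> mul g (ginv g) = t g"
  and ginv_l: "g \<in> G \<Longrightarrow> mul (ginv g) g = s g"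
  using grp unfolding groupoid_def by blast+

lemma ginv_ginv: assumes g: "g \<in> G" shows "ginv (ginv g) = g"
proof -
  let ?h = "ginv g" let ?h' = "ginv ?h"
  have h: "?h \<in> G" "?h' \<in> G" using g ginv_G by auto
  have "?h' = mul ?h' (s ?h')" using mul_unit h by auto
  also have "s ?h' = mul ?h g" using ginv_s[OF h(1)] ginv_t[OF g] ginv_l[OF g] by simp
  also have "mul ?h' (mul ?h g) = mul (mul ?h' ?h) g"
    using mul_assoc[of ?h' ?h g] g h ginv_s ginv_t by auto
  also have "mul ?h' ?h = t g" using ginv_l[OF h(1)] ginv_s[OF g] by simp
  also have "mul (t g) g = g" using mul_unit g by auto
  finally show ?thesis .
qed

lemma ginv_obj: assumes "e \<in> G0" shows "ginv e = e"
proof -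
  have e: "e \<in> G" using assms G0_sub by auto
  have "mul e (ginv e) = ginv e"
    using mul_unit(1)[OF ginv_G[OF e]] ginv_t[OF e] st_obj[OF assms] by simp
  moreover have "mul e (ginv e) = e" using ginv_r[OF e] st_obj[OF assms] by simp
  ultimately show ?thesis by simp
qed

lemma obj_mul: "e \<in> G0 \<Longrightarrow> mul e e = e"
  using mul_unit(1)[OF G0_sub] st_obj by metis

lemma mul_inv_obj:
  assumes g: "g \<in> G" and c: "k \<in> G" "t g = t k" and e: "mul (ginv g) k \<in> G0"
  shows "g = k"
proof -
  let ?e = "mul (ginv g) k"
  have hc: "s (ginv g) = t k" using ginv_s g c by simp
  have "mul g ?e = mul (mul g (ginv g)) k"
    using mul_assoc[of g "ginv g" k] g c ginv_G ginv_t ginv_s by simp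
  also have "\<dots> = k" using ginv_r g c mul_unit by simp
  finally have 1: "mul g ?e = k" .
  have "t ?e = s g" using mul_t[of "ginv g" k] hc g c ginv_G ginv_t by simp
  then have "?e = s g" using st_obj(2)[OF e] by simp
  then have "mul g ?e = g" using mul_unit g by simp
  with 1 show ?thesis by simp
qed

lemma mul_ginv_s: "g \<in> G \<Longrightarrow> mul (ginv g) (t g) = ginv g"
  using mul_unit(2)[OF ginv_G] ginv_s by metis

lemma ci: "g \<in> G \<Longrightarrow> central_idempotent (one_g g)"
  using glob unfolding global_action_def unital_partial_action_def by blast
lemma A_t: "g \<in> G \<Longrightarrow> A g = A (t g)"
  using glob unfolding global_action_def by blast
lemma one_t: "g \<in> G \<Longrightarrow> one_g g = one_g (t g)"
  using ideal_eq_idem[OF ci ci A_t] st_G by blast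
lemma one_ginv: "g \<in> G \<Longrightarrow> one_g (ginv g) = one_g (s g)"
  using one_t[OF ginv_G] ginv_t by metis
lemma alpha_bij: "g \<in> G \<Longrightarrow> bij_betw (alpha g) (A (ginv g)) (A g)"
  using glob unfolding global_action_def unital_partial_action_def by blast
lemma alpha_add: "g \<in> G \<Longrightarrow> x \<in> A (ginv g) \<Longrightarrow> y \<in> A (ginv g) \<Longrightarrow> alpha g (x + y) = alpha g x + alpha g y"
  using glob unfolding global_action_def unital_partial_action_def by blast
lemma alpha_mult: "g \<in> G \<Longrightarrow> x \<in> A (ginv g) \<Longrightarrow> y \<in> A (ginv g) \<Longrightarrow> alpha g (x * y) = alpha g x * alpha g y"
  using glob unfolding global_action_def unital_partial_action_def by blast
lemma alpha_id: "e \<in> G0 \<Longrightarrow> x \<in> A e \<Longrightarrow> alpha e x = x"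
  using glob unfolding global_action_def unital_partial_action_def by blast
lemma alpha_comp: "g \<in> G \<Longrightarrow> h \<in> G \<Longrightarrow> s g = t h \<Longrightarrow> x \<in> A (ginv h) \<Longrightarrow> alpha h x \<in> A (ginv g) \<Longrightarrow>
   alpha g (alpha h x) = alpha (mul g h) x"
  using glob unfolding global_action_def unital_partial_action_def by blast

lemma alpha_in: "g \<in> G \<Longrightarrow> x \<in> A (ginv g) \<Longrightarrow> alpha g x \<in> A g"
  using alpha_bij bij_betw_apply by metis
lemma alpha_inj: "g \<in> G \<Longrightarrow> x \<in> A (ginv g) \<Longrightarrow> y \<in> A (ginv g) \<Longrightarrow> alpha g x = alpha g y \<Longrightarrow> x = y"
  using alpha_bij bij_betw_imp_inj_on inj_onD by metis
lemma ci_ginv: "g \<in> G \<Longrightarrow> central_idempotent (one_g (ginv g))"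
  using ci ginv_G by blast
lemma alpha_zero: assumes "g \<in> G" shows "alpha g 0 = 0"
proof -
  have z: "0 \<in> A (ginv g)" using ideal_zero ci_ginv assms by blast
  have "alpha g (0 + 0) = alpha g 0 + alpha g 0" using alpha_add[OF assms z z] .
  then show ?thesis by simp
qed

lemma A_ginv: "g \<in> G \<Longrightarrow> A (ginv g) = A (s g)"
  using one_ginv by simp
lemma A_eq_t: "g \<in> G \<Longrightarrow> A g = A (t g)" using one_t by simp

lemma alpha_inv: assumes g: "g \<in> G" and y: "y \<in> A g"
  shows "alpha g (alpha (ginv g) y) = y"
proof -
  have gi: "ginv g \<in> G" using ginv_G g .
  have y': "y \<in> A (ginv (ginv g))" using y ginv_ginv g by simp
  have "alpha (ginv g) y \<in> A (ginv g)" using alpha_in[OF gi y'] .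
  then have "alpha g (alpha (ginv g) y) = alpha (mul g (ginv g)) y"
    using alpha_comp[OF g gi _ y'] ginv_t g by simp
  also have "\<dots> = y" using ginv_r g alpha_id st_G0 y A_eq_t by simp
  finally show ?thesis .
qed

lemma alpha_neg: assumes "g \<in> G" "x \<in> A (ginv g)" shows "alpha g (- x) = - alpha g x"
proof -
  have "- x \<in> A (ginv g)" using ideal_neg ci_ginv assms by blast
  then have "alpha g (x + - x) = alpha g x + alpha g (- x)" using alpha_add assms by blast
  then show ?thesis using alpha_zero assms by (simp add: eq_neg_iff_add_eq_0 add.commute)
qed

lemma alpha_of_nat: assumes "g \<in> G" "x \<in> A (ginv g)" shows "alpha g (of_nat n * x) = of_nat n * alpha g x"
proof (induction n)
  case 0 then show ?case using alpha_zero assms by simp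
next
  case (Suc n)
  have "of_nat n * x \<in> A (ginv g)" using ideal_lmul ci_ginv assms by blast
  then have "alpha g (of_nat n * x + x) = alpha g (of_nat n * x) + alpha g x" using alpha_add assms by blast
  moreover have "(of_nat (Suc n) :: 'a) * x = of_nat n * x + x" by (simp add: distrib_right)
  moreover have "(of_nat (Suc n) :: 'a) * alpha g x = of_nat n * alpha g x + alpha g x" by (simp add: distrib_right)
  ultimately show ?case using Suc by simp
qed

lemma alpha_of_int: assumes "g \<in> G" "x \<in> A (ginv g)" shows "alpha g (of_int n * x) = of_int n * alpha g x"
proof (cases "n \<ge> 0")
  case True
  then have "of_int n = (of_nat (nat n) :: 'a)" by simp
  then show ?thesis using alpha_of_nat assms by simp
next
  case False
  then have "of_int n = - (of_nat (nat (- n)) :: 'a)" by simp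
  moreover have "of_nat (nat (- n)) * x \<in> A (ginv g)" using ideal_lmul ci_ginv assms by blast
  ultimately show ?thesis using alpha_of_nat alpha_neg assms by simp
qed

lemma alpha_sum: assumes "g \<in> G" "\<And>i. i \<in> I \<Longrightarrow> f i \<in> A (ginv g)"
  shows "alpha g (sum f I) = (\<Sum>i\<in>I. alpha g (f i))"
  using assms(2)
proof (induction I rule: infinite_finite_induct)
  case (infinite I) then show ?case using alpha_zero assms by simp
next
  case empty then show ?case using alpha_zero assms by simp
next
  case (insert i I)
  have "sum f I \<in> A (ginv g)" using ideal_sum ci_ginv assms(1) insert by blast
  then show ?case using insert alpha_add assms(1) by simp
qed

end

lemma sum_single:
  assumes "finite X" "\<And>x. x \<in> X \<Longrightarrow> x \<noteq> a \<Longrightarrow> f x = 0"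
  shows "sum f X = (if a \<in> X then f a else 0)"
proof (cases "a \<in> X")
  case True
  have "sum f X = f a + sum f (X - {a})" by (rule sum.remove[OF assms(1) True])
  moreover have "sum f (X - {a}) = 0" by (rule sum.neutral) (use assms(2) in blast)
  ultimately show ?thesis using True by simp
next
  case False
  have "sum f X = 0" by (rule sum.neutral) (use assms(2) False in blast)
  then show ?thesis using False by simp
qed

context skset begin

abbreviation "S \<equiv> skew_groupoid_ring G G0 s t mul ginv one_g alpha"
abbreviation "emb \<equiv> skew_embed G0 one_g"
definition dl :: "'g \<Rightarrow> 'g \<Rightarrow> 'a" where "dl \<gamma> = (\<lambda>k. if k = \<gamma> then one_g \<gamma> else 0)"

lemma carrier_S: "f \<in> carrier S \<longleftrightarrow> (\<forall>g. g \<notin> G \<longrightarrow> f g = 0) \<and> (\<forall>g\<in>G. f g \<in> A g) \<and> finite {g. f g \<noteq> 0}"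
  by (simp add: skew_groupoid_ring_def)
lemma mult_S: "(f \<otimes>\<^bsub>S\<^esub> h) k = (if k \<in> G then
                        (\<Sum>g\<in>{g\<in>G. f g \<noteq> 0 \<and> t g = t k}.
                            alpha g (alpha (ginv g) (f g) * h (mul (ginv g) k)))
                      else 0)"
  by (simp add: skew_groupoid_ring_def)
lemma add_S: "f \<oplus>\<^bsub>S\<^esub> h = (\<lambda>k. f k + h k)" by (simp add: skew_groupoid_ring_def)
lemma zero_S: "\<zero>\<^bsub>S\<^esub> = (\<lambda>k. 0)" by (simp add: skew_groupoid_ring_def)
lemma one_S: "\<one>\<^bsub>S\<^esub> = (\<lambda>k. if k \<in> G0 then one_g k else 0)" by (simp add: skew_groupoid_ring_def)

lemma carr_out: "f \<in> carrier S \<Longrightarrow> g \<notin> G \<Longrightarrow> f g = 0" using carrier_S by blast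
lemma carr_in: "f \<in> carrier S \<Longrightarrow> g \<in> G \<Longrightarrow> f g \<in> A g" using carrier_S by blast
lemma carr_fin: "f \<in> carrier S \<Longrightarrow> finite {g. f g \<noteq> 0}" using carrier_S by blast
lemma carr_fin': "f \<in> carrier S \<Longrightarrow> finite {g\<in>G. f g \<noteq> 0 \<and> P g}"
  using carr_fin by (rule finite_subset[rotated]) auto

lemma one_nz: "g \<in> G \<Longrightarrow> one_g g \<noteq> 0" using one_t[of g] nz st_G0(2)[of g] by simp

lemma dl_carrier: assumes "\<gamma> \<in> G" shows "dl \<gamma> \<in> carrier S"
proof -
  have "finite {g. dl \<gamma> g \<noteq> 0}" by (rule finite_subset[of _ "{\<gamma>}"]) (auto simp: dl_def)
  then show ?thesis using assms ideal_self[OF ci[OF assms]] ideal_zero ci unfolding carrier_S dl_def by auto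
qed

lemma alpha_unit: assumes g: "\<gamma> \<in> G" and y: "y \<in> A (ginv \<gamma>)"
  shows "alpha (ginv \<gamma>) (one_g \<gamma>) * y = y"
proof -
  have gi: "ginv \<gamma> \<in> G" using ginv_G g .
  let ?z = "alpha \<gamma> y"
  have z: "?z \<in> A \<gamma>" using alpha_in g y by blast
  have yz: "y = alpha (ginv \<gamma>) ?z" using alpha_inv[OF gi y] ginv_ginv g by simp
  have z': "?z \<in> A (ginv (ginv \<gamma>))" using z ginv_ginv g by simp
  have o': "one_g \<gamma> \<in> A (ginv (ginv \<gamma>))" using ideal_self[OF ci[OF g]] ginv_ginv g by simp
  have "alpha (ginv \<gamma>) (one_g \<gamma>) * alpha (ginv \<gamma>) ?z = alpha (ginv \<gamma>) (one_g \<gamma> * ?z)"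
    using alpha_mult[OF gi o' z'] by simp
  also have "one_g \<gamma> * ?z = ?z" using ideal_mem_l[OF ci[OF g] z] .
  finally show ?thesis using yz by simp
qed

lemma lmul_dl: assumes g: "\<gamma> \<in> G" and a: "a \<in> carrier S"
  shows "(dl \<gamma> \<otimes>\<^bsub>S\<^esub> a) \<gamma> = alpha \<gamma> (a (s \<gamma>))"
proof -
  let ?X = "{g\<in>G. dl \<gamma> g \<noteq> 0 \<and> t g = t \<gamma>}"
  have X: "?X = {\<gamma>}" using g one_nz[OF g] by (auto simp: dl_def)
  have "(dl \<gamma> \<otimes>\<^bsub>S\<^esub> a) \<gamma> = alpha \<gamma> (alpha (ginv \<gamma>) (one_g \<gamma>) * a (mul (ginv \<gamma>) \<gamma>))"
    unfolding mult_S X using g by (simp add: dl_def)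
  also have "mul (ginv \<gamma>) \<gamma> = s \<gamma>" using ginv_l g by simp
  also have "alpha (ginv \<gamma>) (one_g \<gamma>) * a (s \<gamma>) = a (s \<gamma>)"
    using alpha_unit[OF g] carr_in[OF a st_G(1)[OF g]] A_ginv[OF g] by simp
  finally show ?thesis .
qed

lemma rmul_dl: assumes g: "\<gamma> \<in> G" and b: "b \<in> carrier S"
  shows "(b \<otimes>\<^bsub>S\<^esub> dl \<gamma>) (s \<gamma>) = b (ginv \<gamma>)"
proof -
  let ?X = "{g\<in>G. b g \<noteq> 0 \<and> t g = t (s \<gamma>)}"
  let ?f = "\<lambda>g. alpha g (alpha (ginv g) (b g) * dl \<gamma> (mul (ginv g) (s \<gamma>)))"
  have ts: "t (s \<gamma>) = s \<gamma>" using st_obj st_G0 g by blast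
  have gi: "ginv \<gamma> \<in> G" using ginv_G g .
  have "(b \<otimes>\<^bsub>S\<^esub> dl \<gamma>) (s \<gamma>) = sum ?f ?X" unfolding mult_S using st_G g by simp
  also have "\<dots> = (if ginv \<gamma> \<in> ?X then ?f (ginv \<gamma>) else 0)"
  proof (rule sum_single)
    show "finite ?X" using carr_fin' b .
    fix x assume x: "x \<in> ?X" "x \<noteq> ginv \<gamma>"
    then have "mul (ginv x) (s \<gamma>) = ginv x" using mul_ginv_s[of x] ts by simp
    moreover have "ginv x \<noteq> \<gamma>"
    proof
      assume "ginv x = \<gamma>"
      then have "ginv (ginv x) = ginv \<gamma>" by simp
      then show False using x ginv_ginv[of x] by simp
    qed
    ultimately show "?f x = 0" using alpha_zero x by (simp add: dl_def)
  qed
  also have "\<dots> = b (ginv \<gamma>)"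
  proof (cases "ginv \<gamma> \<in> ?X")
    case True
    have y: "b (ginv \<gamma>) \<in> A (ginv \<gamma>)" using carr_in b gi by blast
    have "mul \<gamma> (s \<gamma>) = \<gamma>" using mul_unit g by simp
    then have "?f (ginv \<gamma>) = alpha (ginv \<gamma>) (alpha \<gamma> (b (ginv \<gamma>)) * one_g \<gamma>)"
      using ginv_ginv g by (simp add: dl_def)
    also have "alpha \<gamma> (b (ginv \<gamma>)) * one_g \<gamma> = alpha \<gamma> (b (ginv \<gamma>))"
      using alpha_in[OF g y] ideal_mem ci g by blast
    also have "alpha (ginv \<gamma>) (alpha \<gamma> (b (ginv \<gamma>))) = b (ginv \<gamma>)"
      using alpha_inv[OF gi y] ginv_ginv g by simp
    finally show ?thesis using True by simp
  next
    case False
    then show ?thesis using gi ginv_t g ts by auto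
  qed
  finally show ?thesis .
qed

lemma rmul_emb: assumes g: "\<gamma> \<in> G" and a: "a \<in> carrier S"
  shows "(a \<otimes>\<^bsub>S\<^esub> emb r) \<gamma> = a \<gamma> * alpha \<gamma> (r * one_g (s \<gamma>))"
proof -
  let ?X = "{g\<in>G. a g \<noteq> 0 \<and> t g = t \<gamma>}"
  let ?f = "\<lambda>g. alpha g (alpha (ginv g) (a g) * emb r (mul (ginv g) \<gamma>))"
  have gi: "ginv \<gamma> \<in> G" using ginv_G g .
  have "(a \<otimes>\<^bsub>S\<^esub> emb r) \<gamma> = sum ?f ?X" unfolding mult_S using g by simp
  also have "\<dots> = (if \<gamma> \<in> ?X then ?f \<gamma> else 0)"
  proof (rule sum_single)
    show "finite ?X" using carr_fin' a .
    fix x assume x: "x \<in> ?X" "x \<noteq> \<gamma>"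
    have "mul (ginv x) \<gamma> \<notin> G0"
    proof
      assume "mul (ginv x) \<gamma> \<in> G0"
      then have "x = \<gamma>" using mul_inv_obj[of x \<gamma>] x g by simp
      then show False using x by simp
    qed
    then show "?f x = 0" using alpha_zero x by (simp add: skew_embed_def)
  qed
  also have "\<dots> = a \<gamma> * alpha \<gamma> (r * one_g (s \<gamma>))"
  proof (cases "\<gamma> \<in> ?X")
    case True
    have m: "mul (ginv \<gamma>) \<gamma> = s \<gamma>" using ginv_l g by simp
    have y1: "alpha (ginv \<gamma>) (a \<gamma>) \<in> A (ginv \<gamma>)"
      using alpha_in[OF gi] carr_in[OF a g] ginv_ginv g by simp
    have y2: "r * one_g (s \<gamma>) \<in> A (ginv \<gamma>)" using ideal_gen[OF ci[OF st_G(1)[OF g]]] A_ginv[OF g] by simp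
    have "?f \<gamma> = alpha \<gamma> (alpha (ginv \<gamma>) (a \<gamma>) * (r * one_g (s \<gamma>)))"
      using m st_G0 g by (simp add: skew_embed_def)
    also have "\<dots> = alpha \<gamma> (alpha (ginv \<gamma>) (a \<gamma>)) * alpha \<gamma> (r * one_g (s \<gamma>))"
      using alpha_mult[OF g y1 y2] .
    also have "alpha \<gamma> (alpha (ginv \<gamma>) (a \<gamma>)) = a \<gamma>" using alpha_inv[OF g] carr_in[OF a g] by blast
    finally show ?thesis using True by simp
  next
    case False
    then show ?thesis using g by auto
  qed
  finally show ?thesis .
qed

lemma lmul_emb: assumes g: "\<gamma> \<in> G" and b: "b \<in> carrier S"
  shows "(emb r \<otimes>\<^bsub>S\<^esub> b) (s \<gamma>) = r * one_g (s \<gamma>) * b (s \<gamma>)"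
proof -
  let ?e = "s \<gamma>"
  have e: "?e \<in> G0" using st_G0 g by blast
  have eG: "?e \<in> G" using st_G g by blast
  let ?X = "{g\<in>G. emb r g \<noteq> 0 \<and> t g = t ?e}"
  let ?f = "\<lambda>g. alpha g (alpha (ginv g) (emb r g) * b (mul (ginv g) ?e))"
  have sub: "?X \<subseteq> {?e}" using st_obj e by (auto simp: skew_embed_def)
  have "(emb r \<otimes>\<^bsub>S\<^esub> b) ?e = sum ?f ?X" unfolding mult_S using eG by simp
  also have "\<dots> = (if ?e \<in> ?X then ?f ?e else 0)"
  proof (rule sum_single)
    show "finite ?X" using finite_subset[OF sub] by simp
    fix x assume "x \<in> ?X" "x \<noteq> ?e"
    then show "?f x = 0" using sub by blast
  qed
  also have "\<dots> = r * one_g ?e * b ?e"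
  proof (cases "?e \<in> ?X")
    case True
    have ci': "central_idempotent (one_g ?e)" using ci eG by blast
    have y1: "r * one_g ?e \<in> A ?e" using ideal_gen ci' by blast
    have y2: "r * one_g ?e * b ?e \<in> A ?e" using ideal_rmul[OF ci' y1] by blast
    have "?f ?e = alpha ?e (alpha ?e (r * one_g ?e) * b ?e)"
      using ginv_obj[OF e] obj_mul[OF e] e by (simp add: skew_embed_def)
    also have "\<dots> = r * one_g ?e * b ?e" using alpha_id[OF e] y1 y2 by simp
    finally show ?thesis using True by simp
  next
    case False
    then show ?thesis using e eG st_obj by (auto simp: skew_embed_def)
  qed
  finally show ?thesis .
qed

lemma mult_obj: assumes e0: "e0 \<in> G0" and a: "a \<in> carrier S" and b: "b \<in> carrier S"
  shows "(a \<otimes>\<^bsub>S\<^esub> b) e0 = (\<Sum>g\<in>{g\<in>G. a g \<noteq> 0 \<and> t g = e0}. a g * alpha g (b (ginv g)))"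
proof -
  have "(a \<otimes>\<^bsub>S\<^esub> b) e0 = (\<Sum>g\<in>{g\<in>G. a g \<noteq> 0 \<and> t g = e0}.
            alpha g (alpha (ginv g) (a g) * b (mul (ginv g) e0)))"
    unfolding mult_S using e0 G0_sub st_obj by simp
  also have "\<dots> = (\<Sum>g\<in>{g\<in>G. a g \<noteq> 0 \<and> t g = e0}. a g * alpha g (b (ginv g)))"
  proof (rule sum.cong[OF refl])
    fix g assume "g \<in> {g\<in>G. a g \<noteq> 0 \<and> t g = e0}"
    then have g: "g \<in> G" and tg: "t g = e0" by auto
    have gi: "ginv g \<in> G" using ginv_G g .
    have m: "mul (ginv g) e0 = ginv g" using mul_ginv_s g tg by blast
    have y1: "alpha (ginv g) (a g) \<in> A (ginv g)"
      using alpha_in[OF gi] carr_in[OF a g] ginv_ginv g by simp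
    have y2: "b (ginv g) \<in> A (ginv g)" using carr_in b gi by blast
    show "alpha g (alpha (ginv g) (a g) * b (mul (ginv g) e0)) = a g * alpha g (b (ginv g))"
      using alpha_mult[OF g y1 y2] alpha_inv[OF g] carr_in[OF a g] m by simp
  qed
  finally show ?thesis .
qed

end

context skset begin

lemma mul_cancel: assumes "g \<in> G" "k \<in> G" "t g = t k" shows "mul g (mul (ginv g) k) = k"
proof -
  have c1: "s g = t (ginv g)" using ginv_t[OF assms(1)] by simp
  have c2: "s (ginv g) = t k" using ginv_s[OF assms(1)] assms(3) by simp
  have "mul (mul g (ginv g)) k = mul g (mul (ginv g) k)"
    by (rule mul_assoc[OF assms(1) ginv_G[OF assms(1)] assms(2) c1 c2])
  moreover have "mul (mul g (ginv g)) k = k" using ginv_r[OF assms(1)] assms(3) mul_unit(1)[OF assms(2)] by simp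
  ultimately show ?thesis by simp
qed

lemma S_abelian: "abelian_group S"
proof (rule abelian_groupI)
  fix x y assume x: "x \<in> carrier S" and y: "y \<in> carrier S"
  have "finite {g. x g + y g \<noteq> 0}"
    by (rule finite_subset[of _ "{g. x g \<noteq> 0} \<union> {g. y g \<noteq> 0}"]) (use carr_fin x y in auto)
  moreover have "x g + y g \<in> A g" if g: "g \<in> G" for g
    using ideal_add[OF ci[OF g] carr_in[OF x g] carr_in[OF y g]] .
  ultimately show "x \<oplus>\<^bsub>S\<^esub> y \<in> carrier S"
    unfolding add_S carrier_S using carr_out[OF x] carr_out[OF y] by auto
next
  show "\<zero>\<^bsub>S\<^esub> \<in> carrier S" unfolding zero_S carrier_S using ideal_zero[OF ci] by auto
next
  fix x y z assume "x \<in> carrier S" "y \<in> carrier S" "z \<in> carrier S"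
  show "x \<oplus>\<^bsub>S\<^esub> y \<oplus>\<^bsub>S\<^esub> z = x \<oplus>\<^bsub>S\<^esub> (y \<oplus>\<^bsub>S\<^esub> z)" unfolding add_S by (simp add: add.assoc)
next
  fix x y assume "x \<in> carrier S" "y \<in> carrier S"
  show "x \<oplus>\<^bsub>S\<^esub> y = y \<oplus>\<^bsub>S\<^esub> x" unfolding add_S by (simp add: add.commute)
next
  fix x assume "x \<in> carrier S"
  show "\<zero>\<^bsub>S\<^esub> \<oplus>\<^bsub>S\<^esub> x = x" unfolding add_S zero_S by simp
next
  fix x assume x: "x \<in> carrier S"
  have "- x g \<in> A g" if g: "g \<in> G" for g using ideal_neg[OF ci[OF g] carr_in[OF x g]] .
  then have "(\<lambda>k. - x k) \<in> carrier S"
    unfolding carrier_S using carr_out[OF x] carr_fin[OF x] by auto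
  moreover have "(\<lambda>k. - x k) \<oplus>\<^bsub>S\<^esub> x = \<zero>\<^bsub>S\<^esub>" unfolding add_S zero_S by simp
  ultimately show "\<exists>y\<in>carrier S. y \<oplus>\<^bsub>S\<^esub> x = \<zero>\<^bsub>S\<^esub>" by blast
qed

lemma smul_carrier: assumes y: "y \<in> carrier S" shows "(\<lambda>k. c * y k) \<in> carrier S"
proof -
  have "finite {k. c * y k \<noteq> 0}"
    by (rule finite_subset[of _ "{k. y k \<noteq> 0}"]) (use carr_fin y in auto)
  moreover have "c * y g \<in> A g" if g: "g \<in> G" for g using ideal_lmul[OF ci[OF g] carr_in[OF y g]] .
  ultimately show ?thesis unfolding carrier_S using carr_out[OF y] by auto
qed

lemma mult_closed: assumes a: "a \<in> carrier S" and b: "b \<in> carrier S"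
  shows "a \<otimes>\<^bsub>S\<^esub> b \<in> carrier S"
proof -
  let ?X = "\<lambda>k. {g\<in>G. a g \<noteq> 0 \<and> t g = t k}"
  let ?f = "\<lambda>k g. alpha g (alpha (ginv g) (a g) * b (mul (ginv g) k))"
  have val: "(a \<otimes>\<^bsub>S\<^esub> b) k = (if k \<in> G then sum (?f k) (?X k) else 0)" for k
    by (rule mult_S)
  have term0: "?f k g = 0" if "g \<in> G" "b (mul (ginv g) k) = 0" for g k
    using that alpha_zero by simp
  have inA: "?f k g \<in> A k" if k: "k \<in> G" and g: "g \<in> ?X k" for k g
  proof -
    have gG: "g \<in> G" using g by simp
    have gi: "ginv g \<in> G" using ginv_G gG .
    have "alpha (ginv g) (a g) \<in> A (ginv g)"
      using alpha_in[OF gi] carr_in[OF a gG] ginv_ginv gG by simp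
    then have "alpha (ginv g) (a g) * b (mul (ginv g) k) \<in> A (ginv g)"
      by (rule ideal_rmul[OF ci[OF gi]])
    then have "?f k g \<in> A g" by (rule alpha_in[OF gG])
    then show ?thesis using A_eq_t gG k g by simp
  qed
  have sub: "{k. (a \<otimes>\<^bsub>S\<^esub> b) k \<noteq> 0} \<subseteq> (\<lambda>(g, h). mul g h) ` ({g. a g \<noteq> 0} \<times> {h. b h \<noteq> 0})"
  proof
    fix k assume "k \<in> {k. (a \<otimes>\<^bsub>S\<^esub> b) k \<noteq> 0}"
    then have k: "k \<in> G" and nz0: "sum (?f k) (?X k) \<noteq> 0" using val[of k] by (auto split: if_splits)
    obtain g where g: "g \<in> ?X k" and fg: "?f k g \<noteq> 0"
      using nz0 by (rule sum.not_neutral_contains_not_neutral)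
    have gG: "g \<in> G" and tg: "t g = t k" and ag: "a g \<noteq> 0" using g by auto
    have bh: "b (mul (ginv g) k) \<noteq> 0" using term0[OF gG] fg by blast
    have kk: "k = (\<lambda>(g, h). mul g h) (g, mul (ginv g) k)" using mul_cancel[OF gG k tg] by simp
    show "k \<in> (\<lambda>(g, h). mul g h) ` ({g. a g \<noteq> 0} \<times> {h. b h \<noteq> 0})"
      by (rule image_eqI[where x="(g, mul (ginv g) k)" and f="\<lambda>(g, h). mul g h", OF kk]) (use ag bh in simp)
  qed
  have fin: "finite {k. (a \<otimes>\<^bsub>S\<^esub> b) k \<noteq> 0}"
    by (rule finite_subset[OF sub finite_imageI[OF finite_cartesian_product[OF carr_fin[OF a] carr_fin[OF b]]]])
  have f1: "\<forall>g. g \<notin> G \<longrightarrow> (a \<otimes>\<^bsub>S\<^esub> b) g = 0"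
  proof (intro allI impI)
    fix g assume "g \<notin> G" then show "(a \<otimes>\<^bsub>S\<^esub> b) g = 0" using val[of g] by simp
  qed
  have f2: "\<forall>k\<in>G. (a \<otimes>\<^bsub>S\<^esub> b) k \<in> A k"
  proof
    fix k assume k: "k \<in> G"
    have "sum (?f k) (?X k) \<in> A k" by (rule ideal_sum[OF ci[OF k] inA[OF k]])
    then show "(a \<otimes>\<^bsub>S\<^esub> b) k \<in> A k" using val[of k] k by simp
  qed
  show ?thesis unfolding carrier_S using f1 f2 fin by blast
qed

lemma add_pow_nat_pt: assumes y: "y \<in> carrier S"
  shows "add_pow S (n::nat) y = (\<lambda>k. of_nat n * y k)"
proof (induction n)
  case 0 then show ?case by (simp add: add_pow_def nat_pow_def skew_groupoid_ring_def)
next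
  case (Suc n)
  then show ?case
    by (simp add: add_pow_def nat_pow_def skew_groupoid_ring_def algebra_simps)
qed

lemma add_pow_pt: assumes y: "y \<in> carrier S"
  shows "add_pow S (n::int) y = (\<lambda>k. of_int n * y k)"
proof (cases "n \<ge> 0")
  case True
  then show ?thesis using add_pow_int_ge[of n S y] add_pow_nat_pt[OF y, of "nat n"] by simp
next
  case False
  interpret SG: abelian_group S by (rule S_abelian)
  let ?m = "nat (- n)"
  have c: "(\<lambda>k. of_nat ?m * y k) \<in> carrier S" using smul_carrier y by blast
  have c': "(\<lambda>k. - (of_nat ?m * y k)) \<in> carrier S" using smul_carrier[OF y, of "- of_nat ?m"] by simp
  have "(\<lambda>k. - (of_nat ?m * y k)) \<oplus>\<^bsub>S\<^esub> (\<lambda>k. of_nat ?m * y k) = \<zero>\<^bsub>S\<^esub>"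
    unfolding add_S zero_S by simp
  then have "\<ominus>\<^bsub>S\<^esub> (\<lambda>k. of_nat ?m * y k) = (\<lambda>k. - (of_nat ?m * y k))"
    by (rule SG.minus_equality[OF _ c c'])
  have "add_pow S n y = \<ominus>\<^bsub>S\<^esub> (add_pow S ?m y)" using add_pow_int_lt[of n S y] False by simp
  also have "\<dots> = (\<lambda>k. - (of_nat ?m * y k))" using add_pow_nat_pt[OF y, of ?m] \<open>\<ominus>\<^bsub>S\<^esub> _ = _\<close> by simp
  also have "\<dots> = (\<lambda>k. of_int n * y k)"
  proof
    fix k
    have "(of_int n :: 'a) = - of_nat ?m" using False by simp
    then show "- (of_nat ?m * y k) = of_int n * y k" by simp
  qed
  finally show ?thesis .
qed

lemma finsum_pt: assumes "finite P" "f \<in> P \<rightarrow> carrier S"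
  shows "finsum S f P k = (\<Sum>p\<in>P. f p k)"
  using assms
proof (induction P rule: finite_induct)
  case empty
  interpret SG: abelian_group S by (rule S_abelian)
  show ?case by (simp add: zero_S)
next
  case (insert p P)
  interpret SG: abelian_group S by (rule S_abelian)
  have "finsum S f (insert p P) = f p \<oplus>\<^bsub>S\<^esub> finsum S f P"
    using insert SG.finsum_insert by auto
  then show ?case using insert by (simp add: add_S)
qed

end

context skset begin

lemma key:
  assumes xf: "x \<in> formal_sums S"
    and comm: "\<forall>c\<in>carrier S. tensor_lmul S c x - tensor_rmul S x c \<in> tensor_rel S (range emb)"
    and g: "\<gamma> \<in> G"
  shows "hat (\<lambda>p. fst p \<gamma> * alpha \<gamma> (snd p (ginv \<gamma>))) x
         = alpha \<gamma> (hat (\<lambda>p. fst p (s \<gamma>) * snd p (s \<gamma>)) x)"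
proof -
  have fin: "finite (fsupp x)" using xf by (simp add: formal_sums_def)
  have Pc: "fst p \<in> carrier S" "snd p \<in> carrier S" if "p \<in> fsupp x" for p
    using xf that unfolding formal_sums_def by auto
  let ?c = "dl \<gamma>"
  have c: "?c \<in> carrier S" by (rule dl_carrier[OF g])
  have sg: "s \<gamma> \<in> G" using st_G(1)[OF g] .
  have bin: "b (s \<gamma>) \<in> A (ginv \<gamma>)" if "b \<in> carrier S" for b
    using carr_in[OF that sg] A_ginv[OF g] by simp
  define L where "L = (\<lambda>p::('g \<Rightarrow> 'a) \<times> ('g \<Rightarrow> 'a). fst p \<gamma> * alpha \<gamma> (snd p (s \<gamma>)))"
  let ?l = "tensor_lmul S ?c x" and ?r = "tensor_rmul S x ?c"
  have rel: "finite (fsupp (?l - ?r)) \<and> hat L (?l - ?r) = 0"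
  proof (rule hat_rel[where S=S and R="range emb"])
    fix a a' b assume "a \<in> carrier S" "a' \<in> carrier S" "b \<in> carrier S"
    show "L (a \<oplus>\<^bsub>S\<^esub> a', b) = L (a, b) + L (a', b)" unfolding L_def add_S by (simp add: distrib_right)
  next
    fix a b b' assume "a \<in> carrier S" and b: "b \<in> carrier S" and b': "b' \<in> carrier S"
    have "alpha \<gamma> (b (s \<gamma>) + b' (s \<gamma>)) = alpha \<gamma> (b (s \<gamma>)) + alpha \<gamma> (b' (s \<gamma>))"
      by (rule alpha_add[OF g bin[OF b] bin[OF b']])
    then show "L (a, b \<oplus>\<^bsub>S\<^esub> b') = L (a, b) + L (a, b')" unfolding L_def add_S by (simp add: distrib_left)
  next
    fix a r b assume a: "a \<in> carrier S" and r: "r \<in> range emb" and b: "b \<in> carrier S"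
    obtain r0 where r0: "r = emb r0" using r by blast
    have y1: "r0 * one_g (s \<gamma>) \<in> A (ginv \<gamma>)"
      using ideal_gen[OF ci[OF sg]] A_ginv[OF g] by simp
    have "L (a \<otimes>\<^bsub>S\<^esub> r, b) = a \<gamma> * alpha \<gamma> (r0 * one_g (s \<gamma>)) * alpha \<gamma> (b (s \<gamma>))"
      unfolding L_def r0 using rmul_emb[OF g a] by simp
    also have "\<dots> = a \<gamma> * alpha \<gamma> (r0 * one_g (s \<gamma>) * b (s \<gamma>))"
      using alpha_mult[OF g y1 bin[OF b]] by (simp add: mult.assoc)
    also have "\<dots> = L (a, r \<otimes>\<^bsub>S\<^esub> b)"
      unfolding L_def r0 using lmul_emb[OF g b] by simp
    finally show "L (a \<otimes>\<^bsub>S\<^esub> r, b) = L (a, r \<otimes>\<^bsub>S\<^esub> b)" .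
  next
    show "?l - ?r \<in> tensor_rel S (range emb)" using comm c by blast
  qed
  have hl: "finite (fsupp ?l) \<and> hat L ?l = (\<Sum>p\<in>fsupp x. of_int (x p) * L (?c \<otimes>\<^bsub>S\<^esub> fst p, snd p))"
    unfolding tensor_lmul_def using hat_push[OF fin, where F=L and \<phi>="\<lambda>p. (?c \<otimes>\<^bsub>S\<^esub> fst p, snd p)"] by simp
  have hr: "finite (fsupp ?r) \<and> hat L ?r = (\<Sum>p\<in>fsupp x. of_int (x p) * L (fst p, snd p \<otimes>\<^bsub>S\<^esub> ?c))"
    unfolding tensor_rmul_def using hat_push[OF fin, where F=L and \<phi>="\<lambda>p. (fst p, snd p \<otimes>\<^bsub>S\<^esub> ?c)"] by simp
  have eq: "hat L ?l = hat L ?r" using rel hat_diff[of ?l ?r L] hl hr by simp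
  have "hat L ?l = (\<Sum>p\<in>fsupp x. of_int (x p) * alpha \<gamma> (fst p (s \<gamma>) * snd p (s \<gamma>)))"
    using hl
  proof (simp only:)
    show "(\<Sum>p\<in>fsupp x. of_int (x p) * L (?c \<otimes>\<^bsub>S\<^esub> fst p, snd p)) =
          (\<Sum>p\<in>fsupp x. of_int (x p) * alpha \<gamma> (fst p (s \<gamma>) * snd p (s \<gamma>)))"
    proof (rule sum.cong[OF refl])
      fix p assume p: "p \<in> fsupp x"
      have "L (?c \<otimes>\<^bsub>S\<^esub> fst p, snd p) = alpha \<gamma> (fst p (s \<gamma>)) * alpha \<gamma> (snd p (s \<gamma>))"
        unfolding L_def using lmul_dl[OF g Pc(1)[OF p]] by simp
      also have "\<dots> = alpha \<gamma> (fst p (s \<gamma>) * snd p (s \<gamma>))"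
        using alpha_mult[OF g bin[OF Pc(1)[OF p]] bin[OF Pc(2)[OF p]]] by simp
      finally show "of_int (x p) * L (?c \<otimes>\<^bsub>S\<^esub> fst p, snd p) = of_int (x p) * alpha \<gamma> (fst p (s \<gamma>) * snd p (s \<gamma>))"
        by simp
    qed
  qed
  also have "\<dots> = alpha \<gamma> (hat (\<lambda>p. fst p (s \<gamma>) * snd p (s \<gamma>)) x)"
  proof -
    have t: "of_int (x p) * (fst p (s \<gamma>) * snd p (s \<gamma>)) \<in> A (ginv \<gamma>)" if p: "p \<in> fsupp x" for p
      using ideal_lmul[OF ci_ginv[OF g] ideal_rmul[OF ci_ginv[OF g] bin[OF Pc(1)[OF p]]]] .
    have "alpha \<gamma> (hat (\<lambda>p. fst p (s \<gamma>) * snd p (s \<gamma>)) x)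
        = (\<Sum>p\<in>fsupp x. alpha \<gamma> (of_int (x p) * (fst p (s \<gamma>) * snd p (s \<gamma>))))"
      unfolding hat_def by (rule alpha_sum[OF g t])
    also have "\<dots> = (\<Sum>p\<in>fsupp x. of_int (x p) * alpha \<gamma> (fst p (s \<gamma>) * snd p (s \<gamma>)))"
    proof (rule sum.cong[OF refl])
      fix p assume p: "p \<in> fsupp x"
      show "alpha \<gamma> (of_int (x p) * (fst p (s \<gamma>) * snd p (s \<gamma>))) = of_int (x p) * alpha \<gamma> (fst p (s \<gamma>) * snd p (s \<gamma>))"
        by (rule alpha_of_int[OF g ideal_rmul[OF ci_ginv[OF g] bin[OF Pc(1)[OF p]]]])
    qed
    finally show ?thesis by simp
  qed
  finally have 1: "hat L ?l = alpha \<gamma> (hat (\<lambda>p. fst p (s \<gamma>) * snd p (s \<gamma>)) x)" .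
  have "hat L ?r = (\<Sum>p\<in>fsupp x. of_int (x p) * (fst p \<gamma> * alpha \<gamma> (snd p (ginv \<gamma>))))"
    using hl hr
  proof (simp only:)
    show "(\<Sum>p\<in>fsupp x. of_int (x p) * L (fst p, snd p \<otimes>\<^bsub>S\<^esub> ?c)) =
      (\<Sum>p\<in>fsupp x. of_int (x p) * (fst p \<gamma> * alpha \<gamma> (snd p (ginv \<gamma>))))"
    proof (rule sum.cong[OF refl])
      fix p assume p: "p \<in> fsupp x"
      show "of_int (x p) * L (fst p, snd p \<otimes>\<^bsub>S\<^esub> ?c) = of_int (x p) * (fst p \<gamma> * alpha \<gamma> (snd p (ginv \<gamma>)))"
        unfolding L_def using rmul_dl[OF g Pc(2)[OF p]] by simp
    qed
  qed
  also have "\<dots> = hat (\<lambda>p. fst p \<gamma> * alpha \<gamma> (snd p (ginv \<gamma>))) x" by (simp add: hat_def)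
  finally show ?thesis using 1 eq by simp
qed


lemma main:
  assumes conn: "groupoid_connected G G0 s t" and fin0: "finite G0"
    and sep: "separable_extension S (range emb)"
  shows "finite G"
proof (cases "G0 = {}")
  case True
  have "G = {}"
  proof (rule ccontr)
    assume "G \<noteq> {}"
    then obtain g where "g \<in> G" by blast
    then have "s g \<in> G0" by (rule st_G0(1))
    then show False using True by simp
  qed
  then show ?thesis by simp
next
  case False
  then obtain e0 where e0: "e0 \<in> G0" by blast
  from sep obtain x where xf: "x \<in> formal_sums S" and m1: "tensor_mult_map S x = \<one>\<^bsub>S\<^esub>"
    and comm: "\<forall>c\<in>carrier S. tensor_lmul S c x - tensor_rmul S x c \<in> tensor_rel S (range emb)"
    unfolding separable_extension_def by blast
  have fin: "finite (fsupp x)" using xf by (simp add: formal_sums_def)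
  have Pc: "fst p \<in> carrier S" "snd p \<in> carrier S" if "p \<in> fsupp x" for p
    using xf that unfolding formal_sums_def by auto
  define M where "M \<gamma> = hat (\<lambda>p. fst p \<gamma> * alpha \<gamma> (snd p (ginv \<gamma>))) x" for \<gamma>
  define N where "N e = hat (\<lambda>p. fst p e * snd p e) x" for e
  have keyMN: "M \<gamma> = alpha \<gamma> (N (s \<gamma>))" if "\<gamma> \<in> G" for \<gamma>
    unfolding M_def N_def by (rule key[OF xf comm that])
  define K where "K = (\<Union>p\<in>fsupp x. {g\<in>G. fst p g \<noteq> 0})"
  have finK: "finite K" unfolding K_def
  proof (rule finite_UN_I[OF fin])
    fix p assume "p \<in> fsupp x"
    then show "finite {g\<in>G. fst p g \<noteq> 0}" using carr_fin'[OF Pc(1), of p "\<lambda>_. True"] by simp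
  qed
  have KG: "K \<subseteq> G" unfolding K_def by blast
  have Mout: "M \<gamma> = 0" if "\<gamma> \<notin> K" for \<gamma>
  proof -
    have "fst p \<gamma> = 0" if p: "p \<in> fsupp x" for p
    proof (cases "\<gamma> \<in> G")
      case True then show ?thesis using \<open>\<gamma> \<notin> K\<close> p unfolding K_def by blast
    next
      case False then show ?thesis using carr_out[OF Pc(1)[OF p]] by simp
    qed
    then show ?thesis unfolding M_def hat_def by (intro sum.neutral) simp
  qed
  let ?K0 = "{g\<in>K. t g = e0}"
  have f: "(\<lambda>p. add_pow S (x p) (fst p \<otimes>\<^bsub>S\<^esub> snd p)) \<in> fsupp x \<rightarrow> carrier S"
  proof
    fix p assume p: "p \<in> fsupp x"
    have mc: "fst p \<otimes>\<^bsub>S\<^esub> snd p \<in> carrier S" by (rule mult_closed[OF Pc(1)[OF p] Pc(2)[OF p]])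
    show "add_pow S (x p) (fst p \<otimes>\<^bsub>S\<^esub> snd p) \<in> carrier S"
      unfolding add_pow_pt[OF mc] by (rule smul_carrier[OF mc])
  qed
  have "tensor_mult_map S x e0 = (\<Sum>p\<in>fsupp x. add_pow S (x p) (fst p \<otimes>\<^bsub>S\<^esub> snd p) e0)"
    unfolding tensor_mult_map_def by (rule finsum_pt[OF fin f])
  also have "\<dots> = (\<Sum>p\<in>fsupp x. of_int (x p) * (\<Sum>g\<in>?K0. fst p g * alpha g (snd p (ginv g))))"
  proof (rule sum.cong[OF refl])
    fix p assume p: "p \<in> fsupp x"
    have mc: "fst p \<otimes>\<^bsub>S\<^esub> snd p \<in> carrier S" by (rule mult_closed[OF Pc(1)[OF p] Pc(2)[OF p]])
    have "(fst p \<otimes>\<^bsub>S\<^esub> snd p) e0 = (\<Sum>g\<in>{g\<in>G. fst p g \<noteq> 0 \<and> t g = e0}. fst p g * alpha g (snd p (ginv g)))"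
      by (rule mult_obj[OF e0 Pc(1)[OF p] Pc(2)[OF p]])
    also have "\<dots> = (\<Sum>g\<in>?K0. fst p g * alpha g (snd p (ginv g)))"
    proof (rule sum.mono_neutral_left)
      show "finite ?K0" using finK by simp
      show "{g\<in>G. fst p g \<noteq> 0 \<and> t g = e0} \<subseteq> ?K0" using p unfolding K_def by blast
      show "\<forall>i\<in>?K0 - {g\<in>G. fst p g \<noteq> 0 \<and> t g = e0}. fst p i * alpha i (snd p (ginv i)) = 0"
        using KG by auto
    qed
    finally show "add_pow S (x p) (fst p \<otimes>\<^bsub>S\<^esub> snd p) e0 = of_int (x p) * (\<Sum>g\<in>?K0. fst p g * alpha g (snd p (ginv g)))"
      unfolding add_pow_pt[OF mc] by simp
  qed
  also have "\<dots> = (\<Sum>p\<in>fsupp x. \<Sum>g\<in>?K0. of_int (x p) * (fst p g * alpha g (snd p (ginv g))))"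
    by (simp add: sum_distrib_left)
  also have "\<dots> = (\<Sum>g\<in>?K0. \<Sum>p\<in>fsupp x. of_int (x p) * (fst p g * alpha g (snd p (ginv g))))"
    by (rule sum.swap)
  also have "\<dots> = (\<Sum>g\<in>?K0. M g)" unfolding M_def hat_def by simp
  finally have sumM: "(\<Sum>g\<in>?K0. M g) = one_g e0" using m1 e0 by (simp add: one_S)
  have "one_g e0 \<noteq> 0" using nz e0 by blast
  then have "(\<Sum>g\<in>?K0. M g) \<noteq> 0" using sumM by simp
  then obtain g where g: "g \<in> ?K0" and Mg: "M g \<noteq> 0" by (rule sum.not_neutral_contains_not_neutral)
  have gG: "g \<in> G" using g KG by blast
  let ?e = "s g"
  have Ne: "N ?e \<noteq> 0"
  proof
    assume "N ?e = 0"
    then have "M g = 0" using keyMN[OF gG] alpha_zero[OF gG] by simp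
    then show False using Mg by simp
  qed
  have fib: "{\<gamma>\<in>G. s \<gamma> = ?e} \<subseteq> K"
  proof
    fix \<gamma> assume "\<gamma> \<in> {\<gamma>\<in>G. s \<gamma> = ?e}"
    then have \<gamma>: "\<gamma> \<in> G" and s\<gamma>: "s \<gamma> = ?e" by auto
    show "\<gamma> \<in> K"
    proof (rule ccontr)
      assume "\<gamma> \<notin> K"
      then have "alpha \<gamma> (N ?e) = 0" using Mout keyMN[OF \<gamma>] s\<gamma> by simp
      then have a0: "alpha \<gamma> (N ?e) = alpha \<gamma> 0" using alpha_zero[OF \<gamma>] by simp
      have "N ?e \<in> A ?e" unfolding N_def hat_def
      proof (rule ideal_sum[OF ci[OF st_G(1)[OF gG]]])
        fix p assume p: "p \<in> fsupp x"
        have "fst p ?e \<in> A ?e" by (rule carr_in[OF Pc(1)[OF p] st_G(1)[OF gG]])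
        then show "of_int (x p) * (fst p ?e * snd p ?e) \<in> A ?e"
          by (rule ideal_lmul[OF ci[OF st_G(1)[OF gG]] ideal_rmul[OF ci[OF st_G(1)[OF gG]]]])
      qed
      then have n1: "N ?e \<in> A (ginv \<gamma>)" using A_ginv[OF \<gamma>] s\<gamma> by simp
      have n0: "0 \<in> A (ginv \<gamma>)" by (rule ideal_zero[OF ci_ginv[OF \<gamma>]])
      have "N ?e = 0" by (rule alpha_inj[OF \<gamma> n1 n0 a0])
      then show False using Ne by simp
    qed
  qed
  have finfib: "finite {\<gamma>\<in>G. s \<gamma> = ?e}" by (rule finite_subset[OF fib finK])
  have eG0: "?e \<in> G0" by (rule st_G0(1)[OF gG])
  have fib': "finite {\<gamma>\<in>G. s \<gamma> = e'}" if e': "e' \<in> G0" for e'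
  proof -
    obtain h where h: "h \<in> G" "s h = ?e" "t h = e'"
      using conn eG0 e' unfolding groupoid_connected_def by blast
    have "{\<gamma>\<in>G. s \<gamma> = e'} \<subseteq> (\<lambda>k. mul k (ginv h)) ` {\<gamma>\<in>G. s \<gamma> = ?e}"
    proof
      fix \<gamma> assume "\<gamma> \<in> {\<gamma>\<in>G. s \<gamma> = e'}"
      then have \<gamma>: "\<gamma> \<in> G" and s\<gamma>: "s \<gamma> = e'" by auto
      have c1: "s \<gamma> = t h" using s\<gamma> h by simp
      have c2: "s h = t (ginv h)" using ginv_t[OF h(1)] by simp
      have m: "mul \<gamma> h \<in> G" by (rule mul_G[OF \<gamma> h(1) c1])
      have ms: "s (mul \<gamma> h) = ?e" using mul_s[OF \<gamma> h(1) c1] h by simp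
      have "mul (mul \<gamma> h) (ginv h) = mul \<gamma> (mul h (ginv h))"
        by (rule mul_assoc[OF \<gamma> h(1) ginv_G[OF h(1)] c1 c2])
      also have "mul h (ginv h) = s \<gamma>" using ginv_r[OF h(1)] c1 by simp
      also have "mul \<gamma> (s \<gamma>) = \<gamma>" by (rule mul_unit(2)[OF \<gamma>])
      finally have "\<gamma> = mul (mul \<gamma> h) (ginv h)" by simp
      then show "\<gamma> \<in> (\<lambda>k. mul k (ginv h)) ` {\<gamma>\<in>G. s \<gamma> = ?e}"
        using m ms by blast
    qed
    then show ?thesis by (rule finite_subset) (rule finite_imageI[OF finfib])
  qed
  have "G = (\<Union>e'\<in>G0. {\<gamma>\<in>G. s \<gamma> = e'})" using st_G0(1) by blast
  moreover have "finite (\<Union>e'\<in>G0. {\<gamma>\<in>G. s \<gamma> = e'})" by (rule finite_UN_I[OF fin0 fib'])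
  ultimately show ?thesis by simp
qed

end

theorem proposition4p1:
  fixes G G0 :: "'g set"
    and s t :: "'g \<Rightarrow> 'g"
    and mul :: "'g \<Rightarrow> 'g \<Rightarrow> 'g"
    and ginv :: "'g \<Rightarrow> 'g"
    and one_g :: "'g \<Rightarrow> 'a::ring_1"
    and alpha :: "'g \<Rightarrow> 'a \<Rightarrow> 'a"
  assumes "groupoid G G0 s t mul ginv"
    and "groupoid_connected G G0 s t"
    and "finite G0"
    and "\<forall>e\<in>G0. \<forall>f\<in>G0. e \<noteq> f \<longrightarrow> one_g e * one_g f = 0"
    and "(\<Sum>e\<in>G0. one_g e) = 1"
    and "\<forall>e\<in>G0. ideal_of (one_g e) \<noteq> {0}"
    and "global_action G G0 s t mul ginv one_g alpha"
    and "separable_extension (skew_groupoid_ring G G0 s t mul ginv one_g alpha)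
           (range (skew_embed G0 one_g))"
  shows "finite G"
proof -
  have nz: "\<forall>e\<in>G0. one_g e \<noteq> 0"
  proof
    fix e assume e: "e \<in> G0"
    show "one_g e \<noteq> 0"
    proof
      assume "one_g e = 0"
      then have "ideal_of (one_g e) = {0}" by (auto simp: ideal_of_def)
      then show False using assms(6) e by blast
    qed
  qed
  interpret skset G G0 s t mul ginv one_g alpha
    by (rule skset.intro[OF assms(1) assms(7) nz])
  show ?thesis by (rule main[OF assms(2) assms(3) assms(8)])
qed

end
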